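(* Let $R:\mathcal{C}\to\mathcal{D}$ and $L:\mathcal{D}\to\mathcal{C}$ be functors with $L$ left adjoint to $R$. Let $\mathcal{A}$ be a set of basic morphisms in $\mathcal{C}$ and $\mathcal{A}'$ a set of basic morphisms in $\mathcal{D}$ (all of unit cost) such that $R(\mathcal{A})\subset\mathcal{A}'$ and $L(\mathcal{A}')\subset\mathcal{A}$. Then for every finite diagram $D$ in $\mathcal{C}$ and every finite diagram $D'$ in $\mathcal{D}$, $$c^{\lim}_{\mathcal{D},\mathcal{A}'}(R(D))\le c^{\lim}_{\mathcal{C},\mathcal{A}}(D),\qquad c^{\mathrm{colim}}_{\mathcal{C},\mathcal{A}}(L(D'))\le c^{\mathrm{colim}}_{\mathcal{D},\mathcal{A}'}(D').$$
   Context: A diagram of finite shape $I=(V,E,s,t)$ in a category assigns objects to vertices and morphisms $D(e):D(s(e))\to D(t(e))$ to edges (no commutativity required); the image $F(D)$ under a functor $F$ is obtained by applying $F$ to all objects and morphisms. Subdiagrams are restrictions to full subgraphs. A limit computation with basic morphisms $\mathcal{A}$ is a sequence of diagrams $(D_0,\dots,D_s)$ where $D_0$ consists only of morphisms in $\mathcal{A}$ and each $D_i$ ($i\ge1$) is obtained from $D_{i-1}$ by choosing a full subgraph $J_i$, adding a new vertex $v_i$ carrying a limit of $D_{i-1}|_{J_i}$ with edges from $v_i$ to each vertex of $J_i$ carrying the limit cone morphisms, subject to constructivity: if $v_i$ lies in $J_j$ for some $j>i$ then $J_i\subseteq J_j$. Colimit computations are defined dually (colimits, cocone edges into the new vertex,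 same constructivity). A computation computes $D$ if $D$ is isomorphic to a not-necessarily-full subdiagram of $D_s$; its cost is $s$ plus the number of edges of $D_0$. $c^{\lim}_{\mathcal{C},\mathcal{A}}(D)$ (resp. $c^{\mathrm{colim}}_{\mathcal{C},\mathcal{A}}(D)$) is the minimum cost of a limit (resp. colimit) computation computing $D$, or $\infty$ if none exists. *)

theory Defs
  imports Main "HOL-Library.Extended_Nat"
begin

record ('o,'m) cat =
  Obj :: "'o set"
  Mor :: "'m set"
  CDom :: "'m \<Rightarrow> 'o"
  CCod :: "'m \<Rightarrow> 'o"
  CId :: "'o \<Rightarrow> 'm"
  Comp :: "'m \<Rightarrow> 'm \<Rightarrow> 'm"   (* Comp C g f = g o f *)

definition Hom :: "('o,'m) cat \<Rightarrow> 'o \<Rightarrow> 'o \<Rightarrow> 'm set" where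
  "Hom C x y = {f \<in> Mor C. CDom C f = x \<and> CCod C f = y}"

definition category :: "('o,'m) cat \<Rightarrow> bool" where
  "category C \<longleftrightarrow>
     (\<forall>f\<in>Mor C. CDom C f \<in> Obj C \<and> CCod C f \<in> Obj C) \<and>
     (\<forall>x\<in>Obj C. CId C x \<in> Hom C x x) \<and>
     (\<forall>f\<in>Mor C. \<forall>g\<in>Mor C. CCod C f = CDom C g \<longrightarrow>
        Comp C g f \<in> Hom C (CDom C f) (CCod C g)) \<and>
     (\<forall>f\<in>Mor C. Comp C f (CId C (CDom C f)) = f \<and> Comp C (CId C (CCod C f)) f = f) \<and>
     (\<forall>f\<in>Mor C. \<forall>g\<in>Mor C. \<forall>h\<in>Mor C. CCod C f = CDom C g \<and> CCod C g = CDom C h \<longrightarrow>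
        Comp C h (Comp C g f) = Comp C (Comp C h g) f)"

record ('o1,'m1,'o2,'m2) ftor =
  FObj :: "'o1 \<Rightarrow> 'o2"
  FMor :: "'m1 \<Rightarrow> 'm2"

definition is_functor :: "('o1,'m1) cat \<Rightarrow> ('o2,'m2) cat \<Rightarrow> ('o1,'m1,'o2,'m2) ftor \<Rightarrow> bool" where
  "is_functor C D F \<longleftrightarrow> category C \<and> category D \<and>
     (\<forall>x\<in>Obj C. FObj F x \<in> Obj D) \<and>
     (\<forall>x\<in>Obj C. \<forall>y\<in>Obj C. \<forall>f\<in>Hom C x y. FMor F f \<in> Hom D (FObj F x) (FObj F y)) \<and>
     (\<forall>x\<in>Obj C. FMor F (CId C x) = CId D (FObj F x)) \<and>
     (\<forall>f\<in>Mor C. \<forall>g\<in>Mor C. CCod C f = CDom C g \<longrightarrow>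
        FMor F (Comp C g f) = Comp D (FMor F g) (FMor F f))"

definition adjunction ::
  "('o1,'m1) cat \<Rightarrow> ('o2,'m2) cat \<Rightarrow> ('o2,'m2,'o1,'m1) ftor \<Rightarrow> ('o1,'m1,'o2,'m2) ftor \<Rightarrow> bool" where
  "adjunction C D L R \<longleftrightarrow> is_functor D C L \<and> is_functor C D R \<and>
     (\<exists>\<phi> :: 'o2 \<Rightarrow> 'o1 \<Rightarrow> 'm1 \<Rightarrow> 'm2.
        (\<forall>d\<in>Obj D. \<forall>c\<in>Obj C. bij_betw (\<phi> d c) (Hom C (FObj L d) c) (Hom D d (FObj R c))) \<and>
        (\<forall>d\<in>Obj D. \<forall>d'\<in>Obj D. \<forall>c\<in>Obj C. \<forall>c'\<in>Obj C.
           \<forall>h\<in>Hom D d' d. \<forall>g\<in>Hom C (FObj L d) c. \<forall>k\<in>Hom C c c'.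
             \<phi> d' c' (Comp C k (Comp C g (FMor L h))) = Comp D (FMor R k) (Comp D (\<phi> d c g) h)))"

record ('v,'e,'o,'m) diagram =
  DV :: "'v set"
  DE :: "'e set"
  Src :: "'e \<Rightarrow> 'v"
  Tgt :: "'e \<Rightarrow> 'v"
  DObj :: "'v \<Rightarrow> 'o"
  DMor :: "'e \<Rightarrow> 'm"

definition is_diagram :: "('o,'m) cat \<Rightarrow> ('v,'e,'o,'m) diagram \<Rightarrow> bool" where
  "is_diagram C D \<longleftrightarrow> finite (DV D) \<and> finite (DE D) \<and>
     (\<forall>v\<in>DV D. DObj D v \<in> Obj C) \<and>
     (\<forall>e\<in>DE D. Src D e \<in> DV D \<and> Tgt D e \<in> DV D \<and>
        DMor D e \<in> Hom C (DObj D (Src D e)) (DObj D (Tgt D e)))"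

definition map_diag :: "('o1,'m1,'o2,'m2) ftor \<Rightarrow> ('v,'e,'o1,'m1) diagram \<Rightarrow> ('v,'e,'o2,'m2) diagram" where
  "map_diag F D = \<lparr>DV = DV D, DE = DE D, Src = Src D, Tgt = Tgt D,
      DObj = FObj F \<circ> DObj D, DMor = FMor F \<circ> DMor D\<rparr>"

definition restrict_diag :: "('v,'e,'o,'m) diagram \<Rightarrow> 'v set \<Rightarrow> ('v,'e,'o,'m) diagram" where
  "restrict_diag D J = \<lparr>DV = J, DE = {e\<in>DE D. Src D e \<in> J \<and> Tgt D e \<in> J}, Src = Src D, Tgt = Tgt D,
      DObj = DObj D, DMor = DMor D\<rparr>"

definition is_cone :: "('o,'m) cat \<Rightarrow> ('v,'e,'o,'m) diagram \<Rightarrow> 'o \<Rightarrow> ('v \<Rightarrow> 'm) \<Rightarrow> bool" where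
  "is_cone C D X \<pi> \<longleftrightarrow> X \<in> Obj C \<and>
     (\<forall>v\<in>DV D. \<pi> v \<in> Hom C X (DObj D v)) \<and>
     (\<forall>e\<in>DE D. Comp C (DMor D e) (\<pi> (Src D e)) = \<pi> (Tgt D e))"

definition is_limit :: "('o,'m) cat \<Rightarrow> ('v,'e,'o,'m) diagram \<Rightarrow> 'o \<Rightarrow> ('v \<Rightarrow> 'm) \<Rightarrow> bool" where
  "is_limit C D X \<pi> \<longleftrightarrow> is_cone C D X \<pi> \<and>
     (\<forall>Y \<rho>. is_cone C D Y \<rho> \<longrightarrow> (\<exists>!u. u \<in> Hom C Y X \<and> (\<forall>v\<in>DV D. Comp C (\<pi> v) u = \<rho> v)))"

definition is_cocone :: "('o,'m) cat \<Rightarrow> ('v,'e,'o,'m) diagram \<Rightarrow> 'o \<Rightarrow> ('v \<Rightarrow> 'm) \<Rightarrow> bool" where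
  "is_cocone C D X \<sigma> \<longleftrightarrow> X \<in> Obj C \<and>
     (\<forall>v\<in>DV D. \<sigma> v \<in> Hom C (DObj D v) X) \<and>
     (\<forall>e\<in>DE D. Comp C (\<sigma> (Tgt D e)) (DMor D e) = \<sigma> (Src D e))"

definition is_colimit :: "('o,'m) cat \<Rightarrow> ('v,'e,'o,'m) diagram \<Rightarrow> 'o \<Rightarrow> ('v \<Rightarrow> 'm) \<Rightarrow> bool" where
  "is_colimit C D X \<sigma> \<longleftrightarrow> is_cocone C D X \<sigma> \<and>
     (\<forall>Y \<tau>. is_cocone C D Y \<tau> \<longrightarrow> (\<exists>!u. u \<in> Hom C X Y \<and> (\<forall>v\<in>DV D. Comp C u (\<sigma> v) = \<tau> v)))"

text \<open>One step of a limit computation: add a new vertex v carrying a limit X of the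
  restriction of D to J, with new edges (named by the injective map ed) from v to
  each vertex j of J, carrying the cone morphisms.\<close>
definition lim_step :: "('o,'m) cat \<Rightarrow> ('v,'e,'o,'m) diagram \<Rightarrow> 'v set \<Rightarrow> 'v \<Rightarrow> ('v,'e,'o,'m) diagram \<Rightarrow> bool" where
  "lim_step C D J v D' \<longleftrightarrow> J \<subseteq> DV D \<and> v \<notin> DV D \<and>
     (\<exists>X \<pi> ed. is_limit C (restrict_diag D J) X \<pi> \<and> inj_on ed J \<and> ed ` J \<inter> DE D = {} \<and>
        D' = \<lparr>DV = insert v (DV D), DE = DE D \<union> ed ` J,
              Src = (\<lambda>e. if e \<in> DE D then Src D e else v),
              Tgt = (\<lambda>e. if e \<in> DE D then Tgt D e else the_inv_into J ed e),
              DObj = (DObj D)(v := X),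
              DMor = (\<lambda>e. if e \<in> DE D then DMor D e else \<pi> (the_inv_into J ed e))\<rparr>)"

definition colim_step :: "('o,'m) cat \<Rightarrow> ('v,'e,'o,'m) diagram \<Rightarrow> 'v set \<Rightarrow> 'v \<Rightarrow> ('v,'e,'o,'m) diagram \<Rightarrow> bool" where
  "colim_step C D J v D' \<longleftrightarrow> J \<subseteq> DV D \<and> v \<notin> DV D \<and>
     (\<exists>X \<sigma> ed. is_colimit C (restrict_diag D J) X \<sigma> \<and> inj_on ed J \<and> ed ` J \<inter> DE D = {} \<and>
        D' = \<lparr>DV = insert v (DV D), DE = DE D \<union> ed ` J,
              Src = (\<lambda>e. if e \<in> DE D then Src D e else the_inv_into J ed e),
              Tgt = (\<lambda>e. if e \<in> DE D then Tgt D e else v),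
              DObj = (DObj D)(v := X),
              DMor = (\<lambda>e. if e \<in> DE D then DMor D e else \<sigma> (the_inv_into J ed e))\<rparr>)"

definition is_lim_computation ::
  "('o,'m) cat \<Rightarrow> 'm set \<Rightarrow> (nat \<Rightarrow> (nat,nat,'o,'m) diagram) \<Rightarrow> (nat \<Rightarrow> nat set) \<Rightarrow> (nat \<Rightarrow> nat) \<Rightarrow> nat \<Rightarrow> bool" where
  "is_lim_computation C A Ds Js vs s \<longleftrightarrow>
     is_diagram C (Ds 0) \<and> (\<forall>e\<in>DE (Ds 0). DMor (Ds 0) e \<in> A) \<and>
     (\<forall>i\<in>{1..s}. lim_step C (Ds (i - 1)) (Js i) (vs i) (Ds i)) \<and>
     (\<forall>i j. 1 \<le> i \<and> i < j \<and> j \<le> s \<and> vs i \<in> Js j \<longrightarrow> Js i \<subseteq> Js j)"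

definition is_colim_computation ::
  "('o,'m) cat \<Rightarrow> 'm set \<Rightarrow> (nat \<Rightarrow> (nat,nat,'o,'m) diagram) \<Rightarrow> (nat \<Rightarrow> nat set) \<Rightarrow> (nat \<Rightarrow> nat) \<Rightarrow> nat \<Rightarrow> bool" where
  "is_colim_computation C A Ds Js vs s \<longleftrightarrow>
     is_diagram C (Ds 0) \<and> (\<forall>e\<in>DE (Ds 0). DMor (Ds 0) e \<in> A) \<and>
     (\<forall>i\<in>{1..s}. colim_step C (Ds (i - 1)) (Js i) (vs i) (Ds i)) \<and>
     (\<forall>i j. 1 \<le> i \<and> i < j \<and> j \<le> s \<and> vs i \<in> Js j \<longrightarrow> Js i \<subseteq> Js j)"

definition iso_subdiag :: "('v,'e,'o,'m) diagram \<Rightarrow> ('w,'f,'o,'m) diagram \<Rightarrow> bool" where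
  "iso_subdiag D D' \<longleftrightarrow> (\<exists>fv fe.
     inj_on fv (DV D) \<and> fv ` DV D \<subseteq> DV D' \<and> inj_on fe (DE D) \<and> fe ` DE D \<subseteq> DE D' \<and>
     (\<forall>v\<in>DV D. DObj D' (fv v) = DObj D v) \<and>
     (\<forall>e\<in>DE D. Src D' (fe e) = fv (Src D e) \<and> Tgt D' (fe e) = fv (Tgt D e) \<and>
        DMor D' (fe e) = DMor D e))"

definition c_lim :: "('o,'m) cat \<Rightarrow> 'm set \<Rightarrow> ('v,'e,'o,'m) diagram \<Rightarrow> enat" where
  "c_lim C A D = Inf {enat (s + card (DE (Ds 0))) | (Ds :: nat \<Rightarrow> (nat,nat,'o,'m) diagram) Js vs s.
      is_lim_computation C A Ds Js vs s \<and> iso_subdiag D (Ds s)}"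

definition c_colim :: "('o,'m) cat \<Rightarrow> 'm set \<Rightarrow> ('v,'e,'o,'m) diagram \<Rightarrow> enat" where
  "c_colim C A D = Inf {enat (s + card (DE (Ds 0))) | (Ds :: nat \<Rightarrow> (nat,nat,'o,'m) diagram) Js vs s.
      is_colim_computation C A Ds Js vs s \<and> iso_subdiag D (Ds s)}"

end

theory Submission
  imports Defs
begin

lemma catD: assumes "category C" shows
  catD1: "\<And>f. f\<in>Mor C \<Longrightarrow> CDom C f \<in> Obj C \<and> CCod C f \<in> Obj C"
  and catD2: "\<And>x. x\<in>Obj C \<Longrightarrow> CId C x \<in> Hom C x x"
  and catD3: "\<And>f g. f\<in>Mor C \<Longrightarrow> g\<in>Mor C \<Longrightarrow> CCod C f = CDom C g \<Longrightarrow>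
        Comp C g f \<in> Hom C (CDom C f) (CCod C g)"
  and catD4: "\<And>f. f\<in>Mor C \<Longrightarrow> Comp C f (CId C (CDom C f)) = f \<and> Comp C (CId C (CCod C f)) f = f"
  using assms unfolding category_def by simp_all

lemma HomD: "f \<in> Hom C x y \<Longrightarrow> f \<in> Mor C \<and> CDom C f = x \<and> CCod C f = y"
  unfolding Hom_def by simp

lemma cat_comp: "category C \<Longrightarrow> f \<in> Hom C x y \<Longrightarrow> g \<in> Hom C y z \<Longrightarrow> Comp C g f \<in> Hom C x z"
  using catD3[of C f g] HomD[of f C x y] HomD[of g C y z] by simp
lemma cat_id: "category C \<Longrightarrow> x \<in> Obj C \<Longrightarrow> CId C x \<in> Hom C x x"
  by (rule catD2)
lemma cat_idl: "category C \<Longrightarrow> f \<in> Hom C x y \<Longrightarrow> Comp C (CId C y) f = f"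
  using catD4[of C f] HomD[of f C x y] by simp
lemma cat_idr: "category C \<Longrightarrow> f \<in> Hom C x y \<Longrightarrow> Comp C f (CId C x) = f"
  using catD4[of C f] HomD[of f C x y] by simp
lemma hom_obj: "category C \<Longrightarrow> f \<in> Hom C x y \<Longrightarrow> x \<in> Obj C \<and> y \<in> Obj C"
  using catD1[of C f] HomD[of f C x y] by simp
lemma funD: assumes "is_functor C D F" shows
  fun_cat1: "category C" and fun_cat2: "category D"
  and fun_obj: "\<And>x. x \<in> Obj C \<Longrightarrow> FObj F x \<in> Obj D"
  and fun_hom0: "\<And>x y f. x\<in>Obj C \<Longrightarrow> y\<in>Obj C \<Longrightarrow> f\<in>Hom C x y \<Longrightarrow> FMor F f \<in> Hom D (FObj F x) (FObj F y)"
  and fun_id: "\<And>x. x \<in> Obj C \<Longrightarrow> FMor F (CId C x) = CId D (FObj F x)"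
  and fun_comp0: "\<And>f g. f\<in>Mor C \<Longrightarrow> g\<in>Mor C \<Longrightarrow> CCod C f = CDom C g \<Longrightarrow>
        FMor F (Comp C g f) = Comp D (FMor F g) (FMor F f)"
  using assms unfolding is_functor_def by simp_all
lemma fun_hom: "is_functor C D F \<Longrightarrow> f \<in> Hom C x y \<Longrightarrow> FMor F f \<in> Hom D (FObj F x) (FObj F y)"
  using hom_obj[OF fun_cat1] fun_hom0 by metis
lemma fun_comp: "is_functor C D F \<Longrightarrow> f \<in> Hom C x y \<Longrightarrow> g \<in> Hom C y z \<Longrightarrow>
   FMor F (Comp C g f) = Comp D (FMor F g) (FMor F f)"
  using fun_comp0[of C D F f g] HomD[of f C x y] HomD[of g C y z] by simp

lemma map_diag_diagram: assumes F: "is_functor C D F" and K: "is_diagram C K" shows "is_diagram D (map_diag F K)"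
  using K unfolding is_diagram_def map_diag_def by (simp add: fun_obj[OF F] fun_hom[OF F])

lemma restrict_diagram: "is_diagram C K \<Longrightarrow> J \<subseteq> DV K \<Longrightarrow> is_diagram C (restrict_diag K J)"
  unfolding is_diagram_def restrict_diag_def by (auto intro: finite_subset)

lemma restrict_map: "restrict_diag (map_diag F K) J = map_diag F (restrict_diag K J)"
  unfolding restrict_diag_def map_diag_def by simp

locale adj =
  fixes C :: "('o1,'m1) cat" and Dc :: "('o2,'m2) cat"
    and L :: "('o2,'m2,'o1,'m1) ftor" and R :: "('o1,'m1,'o2,'m2) ftor"
    and \<phi> :: "'o2 \<Rightarrow> 'o1 \<Rightarrow> 'm1 \<Rightarrow> 'm2"
  assumes FL: "is_functor Dc C L" and FR: "is_functor C Dc R"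
    and bij: "\<forall>d\<in>Obj Dc. \<forall>c\<in>Obj C. bij_betw (\<phi> d c) (Hom C (FObj L d) c) (Hom Dc d (FObj R c))"
    and nat: "\<forall>d\<in>Obj Dc. \<forall>d'\<in>Obj Dc. \<forall>c\<in>Obj C. \<forall>c'\<in>Obj C.
           \<forall>h\<in>Hom Dc d' d. \<forall>g\<in>Hom C (FObj L d) c. \<forall>k\<in>Hom C c c'.
             \<phi> d' c' (Comp C k (Comp C g (FMor L h))) = Comp Dc (FMor R k) (Comp Dc (\<phi> d c g) h)"
begin

lemma cC: "category C" by (rule fun_cat1[OF FR])
lemma cD: "category Dc" by (rule fun_cat2[OF FR])

definition psi where "psi d c y = the_inv_into (Hom C (FObj L d) c) (\<phi> d c) y"

lemma bijdc: "d \<in> Obj Dc \<Longrightarrow> c \<in> Obj C \<Longrightarrow> bij_betw (\<phi> d c) (Hom C (FObj L d) c) (Hom Dc d (FObj R c))"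
  using bij by simp

lemma phi_hom: "d \<in> Obj Dc \<Longrightarrow> c \<in> Obj C \<Longrightarrow> g \<in> Hom C (FObj L d) c \<Longrightarrow> \<phi> d c g \<in> Hom Dc d (FObj R c)"
  using bij_betwE[OF bijdc] by simp
lemma phi_inj: "d \<in> Obj Dc \<Longrightarrow> c \<in> Obj C \<Longrightarrow> g \<in> Hom C (FObj L d) c \<Longrightarrow> g' \<in> Hom C (FObj L d) c
  \<Longrightarrow> \<phi> d c g = \<phi> d c g' \<Longrightarrow> g = g'"
  using inj_onD[OF bij_betw_imp_inj_on[OF bijdc]] by simp
lemma psi_hom: assumes "d \<in> Obj Dc" "c \<in> Obj C" "y \<in> Hom Dc d (FObj R c)" shows "psi d c y \<in> Hom C (FObj L d) c"
proof -
  have "y \<in> \<phi> d c ` Hom C (FObj L d) c" using bij_betw_imp_surj_on[OF bijdc[OF assms(1,2)]] assms(3) by simp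
  thus ?thesis unfolding psi_def using the_inv_into_into[OF bij_betw_imp_inj_on[OF bijdc[OF assms(1,2)]]] by simp
qed
lemma phi_psi: assumes "d \<in> Obj Dc" "c \<in> Obj C" "y \<in> Hom Dc d (FObj R c)" shows "\<phi> d c (psi d c y) = y"
proof -
  have "y \<in> \<phi> d c ` Hom C (FObj L d) c" using bij_betw_imp_surj_on[OF bijdc[OF assms(1,2)]] assms(3) by simp
  thus ?thesis unfolding psi_def using f_the_inv_into_f[OF bij_betw_imp_inj_on[OF bijdc[OF assms(1,2)]]] by simp
qed
lemma psi_phi: "d \<in> Obj Dc \<Longrightarrow> c \<in> Obj C \<Longrightarrow> g \<in> Hom C (FObj L d) c \<Longrightarrow> psi d c (\<phi> d c g) = g"
  unfolding psi_def using the_inv_into_f_f[OF bij_betw_imp_inj_on[OF bijdc]] by simp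

lemma nat1: assumes "d \<in> Obj Dc" "c \<in> Obj C" "c' \<in> Obj C" "g \<in> Hom C (FObj L d) c" "k \<in> Hom C c c'"
  shows "\<phi> d c' (Comp C k g) = Comp Dc (FMor R k) (\<phi> d c g)"
proof -
  have i: "CId Dc d \<in> Hom Dc d d" using cat_id[OF cD assms(1)] .
  have "FMor L (CId Dc d) = CId C (FObj L d)" using fun_id[OF FL assms(1)] .
  hence a: "Comp C g (FMor L (CId Dc d)) = g" using cat_idr[OF cC assms(4)] by simp
  have b: "Comp Dc (\<phi> d c g) (CId Dc d) = \<phi> d c g" using cat_idr[OF cD phi_hom[OF assms(1,2,4)]] .
  show ?thesis using nat[rule_format, OF assms(1,1,2,3) i assms(4,5)] a b by simp
qed

lemma nat2: assumes "d \<in> Obj Dc" "d' \<in> Obj Dc" "c \<in> Obj C" "g \<in> Hom C (FObj L d) c" "h \<in> Hom Dc d' d"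
  shows "\<phi> d' c (Comp C g (FMor L h)) = Comp Dc (\<phi> d c g) h"
proof -
  have i: "CId C c \<in> Hom C c c" using cat_id[OF cC assms(3)] .
  have "Comp C g (FMor L h) \<in> Hom C (FObj L d') c" using cat_comp[OF cC fun_hom[OF FL assms(5)] assms(4)] .
  hence a: "Comp C (CId C c) (Comp C g (FMor L h)) = Comp C g (FMor L h)" using cat_idl[OF cC] by blast
  have "Comp Dc (\<phi> d c g) h \<in> Hom Dc d' (FObj R c)" using cat_comp[OF cD assms(5) phi_hom[OF assms(1,3,4)]] .
  hence b: "Comp Dc (FMor R (CId C c)) (Comp Dc (\<phi> d c g) h) = Comp Dc (\<phi> d c g) h"
    using cat_idl[OF cD] fun_id[OF FR assms(3)] by simp
  show ?thesis using nat[rule_format, OF assms(1,2,3,3,5,4) i] a b by simp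
qed

end
context adj begin

lemma lim_pres:
  assumes dg: "is_diagram C K" and lim: "is_limit C K X \<pi>"
  shows "is_limit Dc (map_diag R K) (FObj R X) (FMor R \<circ> \<pi>)"
proof -
  have X: "X \<in> Obj C" and pv: "\<And>v. v \<in> DV K \<Longrightarrow> \<pi> v \<in> Hom C X (DObj K v)"
    and pe: "\<And>e. e \<in> DE K \<Longrightarrow> Comp C (DMor K e) (\<pi> (Src K e)) = \<pi> (Tgt K e)"
    using conjunct1[OF lim[unfolded is_limit_def]] unfolding is_cone_def by auto
  have uni: "\<And>Y \<rho>. is_cone C K Y \<rho> \<Longrightarrow> \<exists>!u. u \<in> Hom C Y X \<and> (\<forall>v\<in>DV K. Comp C (\<pi> v) u = \<rho> v)"
    by (rule conjunct2[OF lim[unfolded is_limit_def], rule_format])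
  have de: "\<And>e. e \<in> DE K \<Longrightarrow> Src K e \<in> DV K \<and> Tgt K e \<in> DV K \<and>
        DMor K e \<in> Hom C (DObj K (Src K e)) (DObj K (Tgt K e))"
    and dv: "\<And>v. v \<in> DV K \<Longrightarrow> DObj K v \<in> Obj C"
    using dg unfolding is_diagram_def by auto
  have cone: "is_cone Dc (map_diag R K) (FObj R X) (FMor R \<circ> \<pi>)"
    unfolding is_cone_def
  proof (intro conjI ballI)
    show "FObj R X \<in> Obj Dc" by (rule fun_obj[OF FR X])
    fix v assume "v \<in> DV (map_diag R K)" thus "(FMor R \<circ> \<pi>) v \<in> Hom Dc (FObj R X) (DObj (map_diag R K) v)"
      using fun_hom[OF FR pv] by (simp add: map_diag_def)
  next
    fix e assume "e \<in> DE (map_diag R K)"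
    hence e: "e \<in> DE K" by (simp add: map_diag_def)
    have s: "Src K e \<in> DV K" and dm: "DMor K e \<in> Hom C (DObj K (Src K e)) (DObj K (Tgt K e))" using de[OF e] by auto
    have "Comp Dc (FMor R (DMor K e)) (FMor R (\<pi> (Src K e))) = FMor R (\<pi> (Tgt K e))"
      using fun_comp[OF FR pv[OF s] dm] pe[OF e] by simp
    thus "Comp Dc (DMor (map_diag R K) e) ((FMor R \<circ> \<pi>) (Src (map_diag R K) e)) = (FMor R \<circ> \<pi>) (Tgt (map_diag R K) e)"
      by (simp add: map_diag_def)
  qed
  show ?thesis unfolding is_limit_def
  proof (intro conjI allI impI cone)
    fix Y \<rho> assume co: "is_cone Dc (map_diag R K) Y \<rho>"
    have Y: "Y \<in> Obj Dc" and rv: "\<And>v. v \<in> DV K \<Longrightarrow> \<rho> v \<in> Hom Dc Y (FObj R (DObj K v))"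
      and re: "\<And>e. e \<in> DE K \<Longrightarrow> Comp Dc (FMor R (DMor K e)) (\<rho> (Src K e)) = \<rho> (Tgt K e)"
      using co unfolding is_cone_def map_diag_def by auto
    define \<tau> where "\<tau> v = psi Y (DObj K v) (\<rho> v)" for v
    have tv: "\<And>v. v \<in> DV K \<Longrightarrow> \<tau> v \<in> Hom C (FObj L Y) (DObj K v)"
      unfolding \<tau>_def by (rule psi_hom[OF Y dv rv])
    have ptv: "\<And>v. v \<in> DV K \<Longrightarrow> \<phi> Y (DObj K v) (\<tau> v) = \<rho> v"
      unfolding \<tau>_def by (rule phi_psi[OF Y dv rv])
    have tco: "is_cone C K (FObj L Y) \<tau>"
      unfolding is_cone_def
    proof (intro conjI ballI)
      show "FObj L Y \<in> Obj C" by (rule fun_obj[OF FL Y])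
      fix v assume "v \<in> DV K" thus "\<tau> v \<in> Hom C (FObj L Y) (DObj K v)" by (rule tv)
    next
      fix e assume e: "e \<in> DE K"
      have s: "Src K e \<in> DV K" and t: "Tgt K e \<in> DV K" using de e by auto
      have h1: "Comp C (DMor K e) (\<tau> (Src K e)) \<in> Hom C (FObj L Y) (DObj K (Tgt K e))"
        using de[OF e] by (intro cat_comp[OF cC tv[OF s]]) auto
      have "\<phi> Y (DObj K (Tgt K e)) (Comp C (DMor K e) (\<tau> (Src K e)))
          = Comp Dc (FMor R (DMor K e)) (\<phi> Y (DObj K (Src K e)) (\<tau> (Src K e)))"
        using de[OF e] by (intro nat1[OF Y dv[OF s] dv[OF t] tv[OF s]]) auto
      also have "\<dots> = \<rho> (Tgt K e)" using ptv s re e by simp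
      also have "\<dots> = \<phi> Y (DObj K (Tgt K e)) (\<tau> (Tgt K e))" using ptv t by simp
      finally show "Comp C (DMor K e) (\<tau> (Src K e)) = \<tau> (Tgt K e)"
        by (rule phi_inj[OF Y dv[OF t] h1 tv[OF t]])
    qed
    obtain u where u0: "u \<in> Hom C (FObj L Y) X \<and> (\<forall>v\<in>DV K. Comp C (\<pi> v) u = \<tau> v)"
      and uu0: "\<forall>u'. u' \<in> Hom C (FObj L Y) X \<and> (\<forall>v\<in>DV K. Comp C (\<pi> v) u' = \<tau> v) \<longrightarrow> u' = u"
      using uni[OF tco] by (rule ex1E)
    have u: "u \<in> Hom C (FObj L Y) X" "\<forall>v\<in>DV K. Comp C (\<pi> v) u = \<tau> v" using u0 by auto
    have uu: "\<And>u'. u' \<in> Hom C (FObj L Y) X \<Longrightarrow> \<forall>v\<in>DV K. Comp C (\<pi> v) u' = \<tau> v \<Longrightarrow> u' = u"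
      using uu0 by simp
    show "\<exists>!w. w \<in> Hom Dc Y (FObj R X) \<and> (\<forall>v\<in>DV (map_diag R K). Comp Dc ((FMor R \<circ> \<pi>) v) w = \<rho> v)"
    proof (rule ex1I[of _ "\<phi> Y X u"], intro conjI ballI)
      show "\<phi> Y X u \<in> Hom Dc Y (FObj R X)" by (rule phi_hom[OF Y X u(1)])
      fix v assume "v \<in> DV (map_diag R K)"
      hence v: "v \<in> DV K" by (simp add: map_diag_def)
      have "Comp Dc ((FMor R \<circ> \<pi>) v) (\<phi> Y X u) = \<phi> Y (DObj K v) (Comp C (\<pi> v) u)"
        using nat1[OF Y X dv[OF v] u(1) pv[OF v]] by simp
      also have "\<dots> = \<rho> v" using u ptv v by simp
      finally show "Comp Dc ((FMor R \<circ> \<pi>) v) (\<phi> Y X u) = \<rho> v" .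
    next
      fix w assume w: "w \<in> Hom Dc Y (FObj R X) \<and>
        (\<forall>v\<in>DV (map_diag R K). Comp Dc ((FMor R \<circ> \<pi>) v) w = \<rho> v)"
      have pw: "psi Y X w \<in> Hom C (FObj L Y) X" using w by (intro psi_hom[OF Y X]) auto
      have "\<forall>v\<in>DV K. Comp C (\<pi> v) (psi Y X w) = \<tau> v"
      proof
        fix v assume v: "v \<in> DV K"
        have "\<phi> Y (DObj K v) (Comp C (\<pi> v) (psi Y X w)) = Comp Dc (FMor R (\<pi> v)) (\<phi> Y X (psi Y X w))"
          using nat1[OF Y X dv[OF v] pw pv[OF v]] .
        also have "\<dots> = Comp Dc (FMor R (\<pi> v)) w" using phi_psi Y X w by simp
        also have "\<dots> = \<rho> v" using w v by (simp add: map_diag_def)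
        also have "\<dots> = \<phi> Y (DObj K v) (\<tau> v)" using ptv v by simp
        finally show "Comp C (\<pi> v) (psi Y X w) = \<tau> v"
          by (rule phi_inj[OF Y dv[OF v] cat_comp[OF cC pw pv[OF v]] tv[OF v]])
      qed
      hence "psi Y X w = u" by (rule uu[OF pw])
      thus "w = \<phi> Y X u" using phi_psi[OF Y X] w by auto
    qed
  qed
qed

lemma colim_pres:
  assumes dg: "is_diagram Dc K" and lim: "is_colimit Dc K X \<sigma>"
  shows "is_colimit C (map_diag L K) (FObj L X) (FMor L \<circ> \<sigma>)"
proof -
  have X: "X \<in> Obj Dc" and sv: "\<And>v. v \<in> DV K \<Longrightarrow> \<sigma> v \<in> Hom Dc (DObj K v) X"
    and se: "\<And>e. e \<in> DE K \<Longrightarrow> Comp Dc (\<sigma> (Tgt K e)) (DMor K e) = \<sigma> (Src K e)"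
    using conjunct1[OF lim[unfolded is_colimit_def]] unfolding is_cocone_def by auto
  have uni: "\<And>Y \<rho>. is_cocone Dc K Y \<rho> \<Longrightarrow> \<exists>!u. u \<in> Hom Dc X Y \<and> (\<forall>v\<in>DV K. Comp Dc u (\<sigma> v) = \<rho> v)"
    by (rule conjunct2[OF lim[unfolded is_colimit_def], rule_format])
  have de: "\<And>e. e \<in> DE K \<Longrightarrow> Src K e \<in> DV K \<and> Tgt K e \<in> DV K \<and>
        DMor K e \<in> Hom Dc (DObj K (Src K e)) (DObj K (Tgt K e))"
    and dv: "\<And>v. v \<in> DV K \<Longrightarrow> DObj K v \<in> Obj Dc"
    using dg unfolding is_diagram_def by auto
  have cone: "is_cocone C (map_diag L K) (FObj L X) (FMor L \<circ> \<sigma>)"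
    unfolding is_cocone_def
  proof (intro conjI ballI)
    show "FObj L X \<in> Obj C" by (rule fun_obj[OF FL X])
    fix v assume "v \<in> DV (map_diag L K)" thus "(FMor L \<circ> \<sigma>) v \<in> Hom C (DObj (map_diag L K) v) (FObj L X)"
      using fun_hom[OF FL sv] by (simp add: map_diag_def)
  next
    fix e assume "e \<in> DE (map_diag L K)"
    hence e: "e \<in> DE K" by (simp add: map_diag_def)
    have t: "Tgt K e \<in> DV K" and dm: "DMor K e \<in> Hom Dc (DObj K (Src K e)) (DObj K (Tgt K e))" using de[OF e] by auto
    have "Comp C (FMor L (\<sigma> (Tgt K e))) (FMor L (DMor K e)) = FMor L (\<sigma> (Src K e))"
      using fun_comp[OF FL dm sv[OF t]] se[OF e] by simp
    thus "Comp C ((FMor L \<circ> \<sigma>) (Tgt (map_diag L K) e)) (DMor (map_diag L K) e) = (FMor L \<circ> \<sigma>) (Src (map_diag L K) e)"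
      by (simp add: map_diag_def)
  qed
  show ?thesis unfolding is_colimit_def
  proof (intro conjI allI impI cone)
    fix Y \<tau> assume co: "is_cocone C (map_diag L K) Y \<tau>"
    have Y: "Y \<in> Obj C" and tv: "\<And>v. v \<in> DV K \<Longrightarrow> \<tau> v \<in> Hom C (FObj L (DObj K v)) Y"
      and te: "\<And>e. e \<in> DE K \<Longrightarrow> Comp C (\<tau> (Tgt K e)) (FMor L (DMor K e)) = \<tau> (Src K e)"
      using co unfolding is_cocone_def map_diag_def by auto
    define \<rho> where "\<rho> v = \<phi> (DObj K v) Y (\<tau> v)" for v
    have rv: "\<And>v. v \<in> DV K \<Longrightarrow> \<rho> v \<in> Hom Dc (DObj K v) (FObj R Y)"
      unfolding \<rho>_def by (rule phi_hom[OF dv Y tv])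
    have rco: "is_cocone Dc K (FObj R Y) \<rho>"
      unfolding is_cocone_def
    proof (intro conjI ballI)
      show "FObj R Y \<in> Obj Dc" by (rule fun_obj[OF FR Y])
      fix v assume "v \<in> DV K" thus "\<rho> v \<in> Hom Dc (DObj K v) (FObj R Y)" by (rule rv)
    next
      fix e assume e: "e \<in> DE K"
      have s: "Src K e \<in> DV K" and t: "Tgt K e \<in> DV K" using de e by auto
      have "Comp Dc (\<rho> (Tgt K e)) (DMor K e) = \<phi> (DObj K (Src K e)) Y (Comp C (\<tau> (Tgt K e)) (FMor L (DMor K e)))"
        unfolding \<rho>_def using nat2[OF dv[OF t] dv[OF s] Y tv[OF t]] de e by simp
      also have "\<dots> = \<rho> (Src K e)" using te e \<rho>_def by simp
      finally show "Comp Dc (\<rho> (Tgt K e)) (DMor K e) = \<rho> (Src K e)" .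
    qed
    obtain u where u0: "u \<in> Hom Dc X (FObj R Y) \<and> (\<forall>v\<in>DV K. Comp Dc u (\<sigma> v) = \<rho> v)"
      and uu0: "\<forall>u'. u' \<in> Hom Dc X (FObj R Y) \<and> (\<forall>v\<in>DV K. Comp Dc u' (\<sigma> v) = \<rho> v) \<longrightarrow> u' = u"
      using uni[OF rco] by (rule ex1E)
    have u: "u \<in> Hom Dc X (FObj R Y)" "\<forall>v\<in>DV K. Comp Dc u (\<sigma> v) = \<rho> v" using u0 by auto
    have uu: "\<And>u'. u' \<in> Hom Dc X (FObj R Y) \<Longrightarrow> \<forall>v\<in>DV K. Comp Dc u' (\<sigma> v) = \<rho> v \<Longrightarrow> u' = u"
      using uu0 by simp
    have pu: "psi X Y u \<in> Hom C (FObj L X) Y" by (rule psi_hom[OF X Y u(1)])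
    show "\<exists>!w. w \<in> Hom C (FObj L X) Y \<and> (\<forall>v\<in>DV (map_diag L K). Comp C w ((FMor L \<circ> \<sigma>) v) = \<tau> v)"
    proof (rule ex1I[of _ "psi X Y u"], intro conjI ballI)
      show "psi X Y u \<in> Hom C (FObj L X) Y" using pu .
      fix v assume "v \<in> DV (map_diag L K)"
      hence v: "v \<in> DV K" by (simp add: map_diag_def)
      have "\<phi> (DObj K v) Y (Comp C (psi X Y u) (FMor L (\<sigma> v))) = Comp Dc (\<phi> X Y (psi X Y u)) (\<sigma> v)"
        using nat2[OF X dv[OF v] Y pu sv[OF v]] .
      also have "\<dots> = Comp Dc u (\<sigma> v)" using phi_psi X Y u by simp
      also have "\<dots> = \<phi> (DObj K v) Y (\<tau> v)" using u v \<rho>_def by simp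
      finally show "Comp C (psi X Y u) ((FMor L \<circ> \<sigma>) v) = \<tau> v"
        using phi_inj[OF dv[OF v] Y _ tv[OF v]] cat_comp[OF cC fun_hom[OF FL sv[OF v]] pu] by simp
    next
      fix w assume w: "w \<in> Hom C (FObj L X) Y \<and>
        (\<forall>v\<in>DV (map_diag L K). Comp C w ((FMor L \<circ> \<sigma>) v) = \<tau> v)"
      have pw: "\<phi> X Y w \<in> Hom Dc X (FObj R Y)" using w by (intro phi_hom[OF X Y]) auto
      have "\<forall>v\<in>DV K. Comp Dc (\<phi> X Y w) (\<sigma> v) = \<rho> v"
      proof
        fix v assume v: "v \<in> DV K"
        have "Comp Dc (\<phi> X Y w) (\<sigma> v) = \<phi> (DObj K v) Y (Comp C w (FMor L (\<sigma> v)))"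
          using nat2[OF X dv[OF v] Y _ sv[OF v]] w by simp
        also have "\<dots> = \<rho> v" using w v \<rho>_def by (simp add: map_diag_def)
        finally show "Comp Dc (\<phi> X Y w) (\<sigma> v) = \<rho> v" .
      qed
      hence "\<phi> X Y w = u" by (rule uu[OF pw])
      thus "w = psi X Y u" using psi_phi[OF X Y] w by auto
    qed
  qed
qed

end
lemma lim_step_diag:
  assumes K: "is_diagram C K" and st: "lim_step C K J v K'"
  shows "is_diagram C K'"
proof -
  have J: "J \<subseteq> DV K" and v: "v \<notin> DV K" using st unfolding lim_step_def by auto
  obtain X \<pi> ed where lim: "is_limit C (restrict_diag K J) X \<pi>" and inj: "inj_on ed J"
    and dis: "ed ` J \<inter> DE K = {}" and K': "K' = \<lparr>DV = insert v (DV K), DE = DE K \<union> ed ` J,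
              Src = (\<lambda>e. if e \<in> DE K then Src K e else v),
              Tgt = (\<lambda>e. if e \<in> DE K then Tgt K e else the_inv_into J ed e),
              DObj = (DObj K)(v := X),
              DMor = (\<lambda>e. if e \<in> DE K then DMor K e else \<pi> (the_inv_into J ed e))\<rparr>"
    using st unfolding lim_step_def by (elim conjE exE) (erule (3) that)
  have X: "X \<in> Obj C" and pv: "\<And>j. j \<in> J \<Longrightarrow> \<pi> j \<in> Hom C X (DObj K j)"
    using conjunct1[OF lim[unfolded is_limit_def]] unfolding is_cone_def restrict_diag_def by auto
  have fK: "finite (DV K)" "finite (DE K)" and ov: "\<And>w. w \<in> DV K \<Longrightarrow> DObj K w \<in> Obj C"
    and oe: "\<And>e. e \<in> DE K \<Longrightarrow> Src K e \<in> DV K \<and> Tgt K e \<in> DV K \<and>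
        DMor K e \<in> Hom C (DObj K (Src K e)) (DObj K (Tgt K e))"
    using K unfolding is_diagram_def by auto
  have fJ: "finite J" using J fK(1) by (rule finite_subset)
  have sK: "DV K' = insert v (DV K)" "DE K' = DE K \<union> ed ` J" "DObj K' = (DObj K)(v := X)"
    "Src K' = (\<lambda>e. if e \<in> DE K then Src K e else v)"
    "Tgt K' = (\<lambda>e. if e \<in> DE K then Tgt K e else the_inv_into J ed e)"
    "DMor K' = (\<lambda>e. if e \<in> DE K then DMor K e else \<pi> (the_inv_into J ed e))"
    by (simp_all add: K')
  have E: "\<And>e. e \<in> DE K \<union> ed ` J \<Longrightarrow> (if e \<in> DE K then Src K e else v) \<in> insert v (DV K) \<and>
         (if e \<in> DE K then Tgt K e else the_inv_into J ed e) \<in> insert v (DV K) \<and>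
         (if e \<in> DE K then DMor K e else \<pi> (the_inv_into J ed e))
         \<in> Hom C (((DObj K)(v := X)) (if e \<in> DE K then Src K e else v))
              (((DObj K)(v := X)) (if e \<in> DE K then Tgt K e else the_inv_into J ed e))"
  proof -
    fix e assume e: "e \<in> DE K \<union> ed ` J"
    show "(if e \<in> DE K then Src K e else v) \<in> insert v (DV K) \<and>
         (if e \<in> DE K then Tgt K e else the_inv_into J ed e) \<in> insert v (DV K) \<and>
         (if e \<in> DE K then DMor K e else \<pi> (the_inv_into J ed e))
         \<in> Hom C (((DObj K)(v := X)) (if e \<in> DE K then Src K e else v))
              (((DObj K)(v := X)) (if e \<in> DE K then Tgt K e else the_inv_into J ed e))"
    proof (cases "e \<in> DE K")
      case True
      have "Src K e \<noteq> v" "Tgt K e \<noteq> v" using oe[OF True] v by auto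
      thus ?thesis using oe[OF True] True by simp
    next
      case False
      then obtain j where j: "j \<in> J" "e = ed j" using e by auto
      have ti: "the_inv_into J ed e = j" using the_inv_into_f_f[OF inj j(1)] j by simp
      have "j \<noteq> v" using j J v by auto
      thus ?thesis using False ti j J pv by auto
    qed
  qed
  show ?thesis unfolding is_diagram_def sK
    using fK fJ
  proof (intro conjI)
    show "\<forall>w\<in>insert v (DV K). ((DObj K)(v := X)) w \<in> Obj C"
    proof
      fix w assume w: "w \<in> insert v (DV K)"
      show "((DObj K)(v := X)) w \<in> Obj C" using X ov w by (cases "w = v") simp_all
    qed
  qed (simp, simp, intro ballI, erule E)
qed

lemma colim_step_diag:
  assumes K: "is_diagram C K" and st: "colim_step C K J v K'"
  shows "is_diagram C K'"
proof -
  have J: "J \<subseteq> DV K" and v: "v \<notin> DV K" using st unfolding colim_step_def by auto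
  obtain X \<sigma> ed where lim: "is_colimit C (restrict_diag K J) X \<sigma>" and inj: "inj_on ed J"
    and dis: "ed ` J \<inter> DE K = {}" and K': "K' = \<lparr>DV = insert v (DV K), DE = DE K \<union> ed ` J,
              Src = (\<lambda>e. if e \<in> DE K then Src K e else the_inv_into J ed e),
              Tgt = (\<lambda>e. if e \<in> DE K then Tgt K e else v),
              DObj = (DObj K)(v := X),
              DMor = (\<lambda>e. if e \<in> DE K then DMor K e else \<sigma> (the_inv_into J ed e))\<rparr>"
    using st unfolding colim_step_def by (elim conjE exE) (erule (3) that)
  have X: "X \<in> Obj C" and pv: "\<And>j. j \<in> J \<Longrightarrow> \<sigma> j \<in> Hom C (DObj K j) X"
    using conjunct1[OF lim[unfolded is_colimit_def]] unfolding is_cocone_def restrict_diag_def by auto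
  have fK: "finite (DV K)" "finite (DE K)" and ov: "\<And>w. w \<in> DV K \<Longrightarrow> DObj K w \<in> Obj C"
    and oe: "\<And>e. e \<in> DE K \<Longrightarrow> Src K e \<in> DV K \<and> Tgt K e \<in> DV K \<and>
        DMor K e \<in> Hom C (DObj K (Src K e)) (DObj K (Tgt K e))"
    using K unfolding is_diagram_def by auto
  have fJ: "finite J" using J fK(1) by (rule finite_subset)
  have sK: "DV K' = insert v (DV K)" "DE K' = DE K \<union> ed ` J" "DObj K' = (DObj K)(v := X)"
    "Src K' = (\<lambda>e. if e \<in> DE K then Src K e else the_inv_into J ed e)"
    "Tgt K' = (\<lambda>e. if e \<in> DE K then Tgt K e else v)"
    "DMor K' = (\<lambda>e. if e \<in> DE K then DMor K e else \<sigma> (the_inv_into J ed e))"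
    by (simp_all add: K')
  have E: "\<And>e. e \<in> DE K \<union> ed ` J \<Longrightarrow> (if e \<in> DE K then Src K e else the_inv_into J ed e) \<in> insert v (DV K) \<and>
         (if e \<in> DE K then Tgt K e else v) \<in> insert v (DV K) \<and>
         (if e \<in> DE K then DMor K e else \<sigma> (the_inv_into J ed e))
         \<in> Hom C (((DObj K)(v := X)) (if e \<in> DE K then Src K e else the_inv_into J ed e))
              (((DObj K)(v := X)) (if e \<in> DE K then Tgt K e else v))"
  proof -
    fix e assume e: "e \<in> DE K \<union> ed ` J"
    show "(if e \<in> DE K then Src K e else the_inv_into J ed e) \<in> insert v (DV K) \<and>
         (if e \<in> DE K then Tgt K e else v) \<in> insert v (DV K) \<and>
         (if e \<in> DE K then DMor K e else \<sigma> (the_inv_into J ed e))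
         \<in> Hom C (((DObj K)(v := X)) (if e \<in> DE K then Src K e else the_inv_into J ed e))
              (((DObj K)(v := X)) (if e \<in> DE K then Tgt K e else v))"
    proof (cases "e \<in> DE K")
      case True
      have "Src K e \<noteq> v" "Tgt K e \<noteq> v" using oe[OF True] v by auto
      thus ?thesis using oe[OF True] True by simp
    next
      case False
      then obtain j where j: "j \<in> J" "e = ed j" using e by auto
      have ti: "the_inv_into J ed e = j" using the_inv_into_f_f[OF inj j(1)] j by simp
      have "j \<noteq> v" using j J v by auto
      thus ?thesis using False ti j J pv by auto
    qed
  qed
  show ?thesis unfolding is_diagram_def sK
    using fK fJ
  proof (intro conjI)
    show "\<forall>w\<in>insert v (DV K). ((DObj K)(v := X)) w \<in> Obj C"
    proof
      fix w assume w: "w \<in> insert v (DV K)"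
      show "((DObj K)(v := X)) w \<in> Obj C" using X ov w by (cases "w = v") simp_all
    qed
  qed (simp, simp, intro ballI, erule E)
qed

lemma lim_comp_diag: "is_lim_computation C A Ds Js vs s \<Longrightarrow> i \<le> s \<Longrightarrow> is_diagram C (Ds i)"
proof (induction i)
  case 0 thus ?case unfolding is_lim_computation_def by simp
next
  case (Suc i)
  have all: "\<forall>i\<in>{1..s}. lim_step C (Ds (i - 1)) (Js i) (vs i) (Ds i)"
    using Suc.prems(1) unfolding is_lim_computation_def by (elim conjE)
  have st: "lim_step C (Ds i) (Js (Suc i)) (vs (Suc i)) (Ds (Suc i))"
    using bspec[OF all, of "Suc i"] Suc.prems(2) by simp
  have dg: "is_diagram C (Ds i)" using Suc.IH Suc.prems by simp
  show ?case by (rule lim_step_diag[OF dg st])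
qed

lemma colim_comp_diag: "is_colim_computation C A Ds Js vs s \<Longrightarrow> i \<le> s \<Longrightarrow> is_diagram C (Ds i)"
proof (induction i)
  case 0 thus ?case unfolding is_colim_computation_def by simp
next
  case (Suc i)
  have all: "\<forall>i\<in>{1..s}. colim_step C (Ds (i - 1)) (Js i) (vs i) (Ds i)"
    using Suc.prems(1) unfolding is_colim_computation_def by (elim conjE)
  have st: "colim_step C (Ds i) (Js (Suc i)) (vs (Suc i)) (Ds (Suc i))"
    using bspec[OF all, of "Suc i"] Suc.prems(2) by simp
  have dg: "is_diagram C (Ds i)" using Suc.IH Suc.prems by simp
  show ?case by (rule colim_step_diag[OF dg st])
qed

lemma iso_subdiag_map: "iso_subdiag K K' \<Longrightarrow> iso_subdiag (map_diag F K) (map_diag F K')"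
  unfolding iso_subdiag_def map_diag_def apply (elim exE) subgoal for fv fe
    by (rule exI[of _ fv], simp, rule exI[of _ fe], simp) done
lemma map_diag_simps[simp]:
  "DV (map_diag F K) = DV K" "DE (map_diag F K) = DE K" "Src (map_diag F K) = Src K"
  "Tgt (map_diag F K) = Tgt K" "DObj (map_diag F K) = FObj F \<circ> DObj K" "DMor (map_diag F K) = FMor F \<circ> DMor K"
  unfolding map_diag_def by simp_all

lemma map_diag_simps2[simp]:
  "Src (map_diag F K) e = Src K e" "Tgt (map_diag F K) e = Tgt K e"
  "DObj (map_diag F K) w = FObj F (DObj K w)" "DMor (map_diag F K) e = FMor F (DMor K e)"
  unfolding map_diag_def by simp_all

context adj begin

lemma lim_step_map:
  assumes dg: "is_diagram C K" and st: "lim_step C K J v K'"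
  shows "lim_step Dc (map_diag R K) J v (map_diag R K')"
proof -
  have J: "J \<subseteq> DV K" and v: "v \<notin> DV K" using st unfolding lim_step_def by auto
  obtain X \<pi> ed where lim: "is_limit C (restrict_diag K J) X \<pi>" and inj: "inj_on ed J"
    and dis: "ed ` J \<inter> DE K = {}" and K': "K' = \<lparr>DV = insert v (DV K), DE = DE K \<union> ed ` J,
              Src = (\<lambda>e. if e \<in> DE K then Src K e else v),
              Tgt = (\<lambda>e. if e \<in> DE K then Tgt K e else the_inv_into J ed e),
              DObj = (DObj K)(v := X),
              DMor = (\<lambda>e. if e \<in> DE K then DMor K e else \<pi> (the_inv_into J ed e))\<rparr>"
    using st unfolding lim_step_def by (elim conjE exE) (erule (3) that)
  have lim': "is_limit Dc (restrict_diag (map_diag R K) J) (FObj R X) (FMor R \<circ> \<pi>)"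
    unfolding restrict_map by (rule lim_pres[OF restrict_diagram[OF dg J] lim])
  have eq: "map_diag R K' = \<lparr>DV = insert v (DV K), DE = DE K \<union> ed ` J,
              Src = (\<lambda>e. if e \<in> DE K then Src K e else v),
              Tgt = (\<lambda>e. if e \<in> DE K then Tgt K e else the_inv_into J ed e),
              DObj = (FObj R \<circ> DObj K)(v := FObj R X),
              DMor = (\<lambda>e. if e \<in> DE K then (FMor R \<circ> DMor K) e else (FMor R \<circ> \<pi>) (the_inv_into J ed e))\<rparr>"
    unfolding K' map_diag_def by (simp add: fun_eq_iff)
  show ?thesis unfolding lim_step_def
    apply (intro conjI)
      apply (simp add: J)
     apply (simp add: v)
    apply (rule exI[of _ "FObj R X"], rule exI[of _ "FMor R \<circ> \<pi>"], rule exI[of _ ed])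
    using lim' inj dis eq by (simp add: fun_eq_iff)
qed

lemma colim_step_map:
  assumes dg: "is_diagram Dc K" and st: "colim_step Dc K J v K'"
  shows "colim_step C (map_diag L K) J v (map_diag L K')"
proof -
  have J: "J \<subseteq> DV K" and v: "v \<notin> DV K" using st unfolding colim_step_def by auto
  obtain X \<sigma> ed where lim: "is_colimit Dc (restrict_diag K J) X \<sigma>" and inj: "inj_on ed J"
    and dis: "ed ` J \<inter> DE K = {}" and K': "K' = \<lparr>DV = insert v (DV K), DE = DE K \<union> ed ` J,
              Src = (\<lambda>e. if e \<in> DE K then Src K e else the_inv_into J ed e),
              Tgt = (\<lambda>e. if e \<in> DE K then Tgt K e else v),
              DObj = (DObj K)(v := X),
              DMor = (\<lambda>e. if e \<in> DE K then DMor K e else \<sigma> (the_inv_into J ed e))\<rparr>"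
    using st unfolding colim_step_def by (elim conjE exE) (erule (3) that)
  have lim': "is_colimit C (restrict_diag (map_diag L K) J) (FObj L X) (FMor L \<circ> \<sigma>)"
    unfolding restrict_map by (rule colim_pres[OF restrict_diagram[OF dg J] lim])
  have eq: "map_diag L K' = \<lparr>DV = insert v (DV K), DE = DE K \<union> ed ` J,
              Src = (\<lambda>e. if e \<in> DE K then Src K e else the_inv_into J ed e),
              Tgt = (\<lambda>e. if e \<in> DE K then Tgt K e else v),
              DObj = (FObj L \<circ> DObj K)(v := FObj L X),
              DMor = (\<lambda>e. if e \<in> DE K then (FMor L \<circ> DMor K) e else (FMor L \<circ> \<sigma>) (the_inv_into J ed e))\<rparr>"
    unfolding K' map_diag_def by (simp add: fun_eq_iff)
  show ?thesis unfolding colim_step_def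
    apply (intro conjI)
      apply (simp add: J)
     apply (simp add: v)
    apply (rule exI[of _ "FObj L X"], rule exI[of _ "FMor L \<circ> \<sigma>"], rule exI[of _ ed])
    using lim' inj dis eq by (simp add: fun_eq_iff)
qed

end
theorem lemma6p1:
  fixes C :: "('o1,'m1) cat" and Dc :: "('o2,'m2) cat"
    and L :: "('o2,'m2,'o1,'m1) ftor" and R :: "('o1,'m1,'o2,'m2) ftor"
    and A :: "'m1 set" and A' :: "'m2 set"
    and D :: "('v,'e,'o1,'m1) diagram" and D' :: "('w,'f,'o2,'m2) diagram"
  assumes "adjunction C Dc L R"
    and "A \<subseteq> Mor C" and "A' \<subseteq> Mor Dc"
    and "FMor R ` A \<subseteq> A'" and "FMor L ` A' \<subseteq> A"
    and "is_diagram C D" and "is_diagram Dc D'"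
  shows "c_lim Dc A' (map_diag R D) \<le> c_lim C A D \<and>
         c_colim C A (map_diag L D') \<le> c_colim Dc A' D'"
proof -
  have "\<exists>\<phi>. adj C Dc L R \<phi>"
    using assms(1) unfolding adjunction_def adj_def by simp
  then obtain \<phi> where ad: "adj C Dc L R \<phi>" ..
  interpret adj C Dc L R \<phi> by (rule ad)
  have RA: "\<And>a. a \<in> A \<Longrightarrow> FMor R a \<in> A'" using assms(4) by (simp add: image_subset_iff)
  have LA: "\<And>a. a \<in> A' \<Longrightarrow> FMor L a \<in> A" using assms(5) by (simp add: image_subset_iff)
  have part1: "c_lim Dc A' (map_diag R D) \<le> c_lim C A D"
    unfolding c_lim_def
  proof (rule Inf_superset_mono, rule subsetI)
    fix x assume "x \<in> {enat (s + card (DE (Ds 0))) | (Ds :: nat \<Rightarrow> (nat,nat,'o1,'m1) diagram) Js vs s.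
      is_lim_computation C A Ds Js vs s \<and> iso_subdiag D (Ds s)}"
    then obtain Ds Js vs s where x: "x = enat (s + card (DE (Ds 0)))"
      and comp: "is_lim_computation C A Ds Js vs s" and iso: "iso_subdiag D (Ds s)"
      unfolding mem_Collect_eq by (elim exE conjE) (rule that; assumption)
    define Ds' where "Ds' i = map_diag R (Ds i)" for i
    have cs: "is_diagram C (Ds 0)" "\<forall>e\<in>DE (Ds 0). DMor (Ds 0) e \<in> A"
      "\<forall>i\<in>{1..s}. lim_step C (Ds (i - 1)) (Js i) (vs i) (Ds i)"
      "\<forall>i j. 1 \<le> i \<and> i < j \<and> j \<le> s \<and> vs i \<in> Js j \<longrightarrow> Js i \<subseteq> Js j"
      using comp unfolding is_lim_computation_def by simp_all
    have comp': "is_lim_computation Dc A' Ds' Js vs s"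
      unfolding is_lim_computation_def
    proof (intro conjI)
      show "is_diagram Dc (Ds' 0)" unfolding Ds'_def by (rule map_diag_diagram[OF FR cs(1)])
      show "\<forall>e\<in>DE (Ds' 0). DMor (Ds' 0) e \<in> A'" unfolding Ds'_def using cs(2) RA by simp
      show "\<forall>i\<in>{1..s}. lim_step Dc (Ds' (i - 1)) (Js i) (vs i) (Ds' i)"
      proof
        fix i assume i: "i \<in> {1..s}"
        have "is_diagram C (Ds (i - 1))" using lim_comp_diag[OF comp, of "i - 1"] i by auto
        thus "lim_step Dc (Ds' (i - 1)) (Js i) (vs i) (Ds' i)"
          unfolding Ds'_def using lim_step_map bspec[OF cs(3) i] by simp
      qed
      show "\<forall>i j. 1 \<le> i \<and> i < j \<and> j \<le> s \<and> vs i \<in> Js j \<longrightarrow> Js i \<subseteq> Js j" by (rule cs(4))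
    qed
    have iso': "iso_subdiag (map_diag R D) (Ds' s)" unfolding Ds'_def by (rule iso_subdiag_map[OF iso])
    have card: "DE (Ds' 0) = DE (Ds 0)" by (simp add: Ds'_def)
    show "x \<in> {enat (s + card (DE (Ds 0))) | (Ds :: nat \<Rightarrow> (nat,nat,'o2,'m2) diagram) Js vs s.
      is_lim_computation Dc A' Ds Js vs s \<and> iso_subdiag (map_diag R D) (Ds s)}"
      unfolding mem_Collect_eq
      by (rule exI[of _ Ds'], rule exI[of _ Js], rule exI[of _ vs], rule exI[of _ s])
        (simp add: x card comp' iso')
  qed
  have part2: "c_colim C A (map_diag L D') \<le> c_colim Dc A' D'"
    unfolding c_colim_def
  proof (rule Inf_superset_mono, rule subsetI)
    fix x assume "x \<in> {enat (s + card (DE (Ds 0))) | (Ds :: nat \<Rightarrow> (nat,nat,'o2,'m2) diagram) Js vs s.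
      is_colim_computation Dc A' Ds Js vs s \<and> iso_subdiag D' (Ds s)}"
    then obtain Ds Js vs s where x: "x = enat (s + card (DE (Ds 0)))"
      and comp: "is_colim_computation Dc A' Ds Js vs s" and iso: "iso_subdiag D' (Ds s)"
      unfolding mem_Collect_eq by (elim exE conjE) (rule that; assumption)
    define Ds' where "Ds' i = map_diag L (Ds i)" for i
    have cs: "is_diagram Dc (Ds 0)" "\<forall>e\<in>DE (Ds 0). DMor (Ds 0) e \<in> A'"
      "\<forall>i\<in>{1..s}. colim_step Dc (Ds (i - 1)) (Js i) (vs i) (Ds i)"
      "\<forall>i j. 1 \<le> i \<and> i < j \<and> j \<le> s \<and> vs i \<in> Js j \<longrightarrow> Js i \<subseteq> Js j"
      using comp unfolding is_colim_computation_def by simp_all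
    have comp': "is_colim_computation C A Ds' Js vs s"
      unfolding is_colim_computation_def
    proof (intro conjI)
      show "is_diagram C (Ds' 0)" unfolding Ds'_def by (rule map_diag_diagram[OF FL cs(1)])
      show "\<forall>e\<in>DE (Ds' 0). DMor (Ds' 0) e \<in> A" unfolding Ds'_def using cs(2) LA by simp
      show "\<forall>i\<in>{1..s}. colim_step C (Ds' (i - 1)) (Js i) (vs i) (Ds' i)"
      proof
        fix i assume i: "i \<in> {1..s}"
        have "is_diagram Dc (Ds (i - 1))" using colim_comp_diag[OF comp, of "i - 1"] i by auto
        thus "colim_step C (Ds' (i - 1)) (Js i) (vs i) (Ds' i)"
          unfolding Ds'_def using colim_step_map bspec[OF cs(3) i] by simp
      qed
      show "\<forall>i j. 1 \<le> i \<and> i < j \<and> j \<le> s \<and> vs i \<in> Js j \<longrightarrow> Js i \<subseteq> Js j" by (rule cs(4))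
    qed
    have iso': "iso_subdiag (map_diag L D') (Ds' s)" unfolding Ds'_def by (rule iso_subdiag_map[OF iso])
    have card: "DE (Ds' 0) = DE (Ds 0)" by (simp add: Ds'_def)
    show "x \<in> {enat (s + card (DE (Ds 0))) | (Ds :: nat \<Rightarrow> (nat,nat,'o1,'m1) diagram) Js vs s.
      is_colim_computation C A Ds Js vs s \<and> iso_subdiag (map_diag L D') (Ds s)}"
      unfolding mem_Collect_eq
      by (rule exI[of _ Ds'], rule exI[of _ Js], rule exI[of _ vs], rule exI[of _ s])
        (simp add: x card comp' iso')
  qed
  show ?thesis using part1 part2 by simp
qed

end
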